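(* Let $G^0,G^1,G^2$ be finite-dimensional complex vector spaces with $\dim G^1\ge1$. For a subspace $E\subset\mathrm{Hom}(G^0,G^1)$, define $$\phi_E:E\times\mathrm{Hom}(G^1,G^2)\to\mathrm{Hom}(G^0,G^2),\qquad(\alpha,\beta)\mapsto\beta\circ\alpha.$$ Let $p=\left\lfloor\frac{\dim G^1-1}{\dim G^0}\right\rfloor+1$. If $\dim G^0>1$, then for every integer $k$ with $3p\le k\le\dim\mathrm{Hom}(G^0,G^1)$ and every $E$ in a nonempty Zariski open subset of $G(k,\mathrm{Hom}(G^0,G^1))$, we have $\mathrm{Symm}(\phi_E)=\{0\}$.
   Context: For a bilinear map $B:E\times F\to G$, define $$\mathrm{Symm}(B)=\{q\in\mathrm{Hom}(E,F): B(\alpha,q(\alpha'))=B(\alpha',q(\alpha))\ \forall\alpha,\alpha'\in E\}.$$ Thus $\mathrm{Symm}(\phi_E)$ is the set of $q\in\mathrm{Hom}(E,\mathrm{Hom}(G^1,G^2))$ with $q(\alpha')\circ\alpha=q(\alpha)\circ\alpha'$ for all $\alpha,\alpha'\in E$. *)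

theory Defs
  imports "HOL-Analysis.Analysis"
begin

text \<open>Finite-dimensional complex vector spaces G0, G1, G2 are modelled as complex^'a, complex^'b,
  complex^'c for finite index types; Hom(G^i,G^j) is the space of complex matrices
  complex^'i^'j (rows indexed by the codomain), composition is matrix product.\<close>

inductive_set polyfun :: "(('v \<Rightarrow> complex) \<Rightarrow> complex) set" where
  const: "(\<lambda>x. c) \<in> polyfun"
| var: "(\<lambda>x. x v) \<in> polyfun"
| add: "p \<in> polyfun \<Longrightarrow> q \<in> polyfun \<Longrightarrow> (\<lambda>x. p x + q x) \<in> polyfun"
| mult: "p \<in> polyfun \<Longrightarrow> q \<in> polyfun \<Longrightarrow> (\<lambda>x. p x * q x) \<in> polyfun"

definition cscale :: "complex \<Rightarrow> complex^'n^'m \<Rightarrow> complex^'n^'m" where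
  "cscale c A = (\<chi> i j. c * A$i$j)"

definition cspan_mats :: "('k::finite \<Rightarrow> complex^'n^'m) \<Rightarrow> (complex^'n^'m) set" where
  "cspan_mats A = {(\<Sum>i\<in>UNIV. cscale (c i) (A i)) | c. True}"

definition clin_indep_mats :: "('k::finite \<Rightarrow> complex^'n^'m) \<Rightarrow> bool" where
  "clin_indep_mats A \<longleftrightarrow> (\<forall>c. (\<Sum>i\<in>UNIV. cscale (c i) (A i)) = 0 \<longrightarrow> (\<forall>i. c i = 0))"

text \<open>Complex-linear maps defined on the set E (represented extensionally: zero off E).\<close>
definition clinear_on_mats ::
  "(complex^'n^'m) set \<Rightarrow> (complex^'n^'m \<Rightarrow> complex^'p^'q) \<Rightarrow> bool" where
  "clinear_on_mats E q \<longleftrightarrow>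
     (\<forall>x\<in>E. \<forall>y\<in>E. q (x + y) = q x + q y) \<and>
     (\<forall>c. \<forall>x\<in>E. q (cscale c x) = cscale c (q x)) \<and>
     (\<forall>x. x \<notin> E \<longrightarrow> q x = 0)"

text \<open>Symm(phi_E) for phi_E : E x Hom(G1,G2) -> Hom(G0,G2), (alpha,beta) |-> beta o alpha.\<close>
definition Symm_phi ::
  "(complex^'a^'b) set \<Rightarrow> (complex^'a^'b \<Rightarrow> complex^'b^'c) set" where
  "Symm_phi E = {q. clinear_on_mats E q \<and>
                    (\<forall>\<alpha>\<in>E. \<forall>\<alpha>'\<in>E. q \<alpha>' ** \<alpha> = q \<alpha> ** \<alpha>')}"

end

theory Submission
  imports Defs "HOL-Computational_Algebra.Polynomial"
begin

lemma polyfun_neg: "p \<in> polyfun \<Longrightarrow> (\<lambda>x. - p x) \<in> polyfun"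
proof -
  assume "p \<in> polyfun"
  then have "(\<lambda>x. (\<lambda>x. -1) x * p x) \<in> polyfun" by (intro polyfun.mult polyfun.const)
  then show ?thesis by simp
qed

lemma polyfun_diff: "p \<in> polyfun \<Longrightarrow> q \<in> polyfun \<Longrightarrow> (\<lambda>x. p x - q x) \<in> polyfun"
  using polyfun.add[OF _ polyfun_neg[of q]] by simp

lemma polyfun_sum: "finite S \<Longrightarrow> (\<And>s. s \<in> S \<Longrightarrow> f s \<in> polyfun) \<Longrightarrow> (\<lambda>x. \<Sum>s\<in>S. f s x) \<in> polyfun"
proof (induction S rule: finite_induct)
  case empty
  then show ?case using polyfun.const[of 0] by simp
next
  case (insert a F)
  then show ?case using polyfun.add[of "f a" "\<lambda>x. \<Sum>s\<in>F. f s x"] by simp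
qed

lemma polyfun_prod: "finite S \<Longrightarrow> (\<And>s. s \<in> S \<Longrightarrow> f s \<in> polyfun) \<Longrightarrow> (\<lambda>x. \<Prod>s\<in>S. f s x) \<in> polyfun"
proof (induction S rule: finite_induct)
  case empty
  then show ?case using polyfun.const[of 1] by simp
next
  case (insert a F)
  then show ?case using polyfun.mult[of "f a" "\<lambda>x. \<Prod>s\<in>F. f s x"] by simp
qed

lemma polyfun_det:
  fixes M :: "('v \<Rightarrow> complex) \<Rightarrow> complex^'n^'n"
  assumes "\<And>i j. (\<lambda>x. M x $ i $ j) \<in> polyfun"
  shows "(\<lambda>x. det (M x)) \<in> polyfun"
  unfolding det_def
  apply (rule polyfun_sum)
   apply (simp add: finite_permutations)
  apply (rule polyfun.mult[OF polyfun.const])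
  apply (rule polyfun_prod)
  using assms by auto

lemma polyfun_line:
  assumes "P \<in> polyfun"
  shows "\<exists>p. \<forall>t. P (\<lambda>v. x1 v + t * (x2 v - x1 v)) = poly p t"
  using assms
proof induction
  case (const c)
  then show ?case by (intro exI[of _ "[:c:]"]) simp
next
  case (var v)
  then show ?case by (intro exI[of _ "[:x1 v, x2 v - x1 v:]"]) (simp add: algebra_simps)
next
  case (add p q)
  then obtain a b where "\<forall>t. p (\<lambda>v. x1 v + t * (x2 v - x1 v)) = poly a t"
     "\<forall>t. q (\<lambda>v. x1 v + t * (x2 v - x1 v)) = poly b t" by blast
  then show ?case by (intro exI[of _ "a + b"]) simp
next
  case (mult p q)
  then obtain a b where "\<forall>t. p (\<lambda>v. x1 v + t * (x2 v - x1 v)) = poly a t"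
     "\<forall>t. q (\<lambda>v. x1 v + t * (x2 v - x1 v)) = poly b t" by blast
  then show ?case by (intro exI[of _ "a * b"]) simp
qed

lemma polyfun_common:
  assumes "P \<in> polyfun" "Q \<in> polyfun" "P x1 \<noteq> 0" "Q x2 \<noteq> 0"
  shows "\<exists>x. P x \<noteq> 0 \<and> Q x \<noteq> 0"
proof -
  obtain p where p: "\<forall>t. P (\<lambda>v. x1 v + t * (x2 v - x1 v)) = poly p t"
    using polyfun_line[OF assms(1)] by blast
  obtain q where q: "\<forall>t. Q (\<lambda>v. x1 v + t * (x2 v - x1 v)) = poly q t"
    using polyfun_line[OF assms(2)] by blast
  have "poly p 0 \<noteq> 0" using p[rule_format, of 0] assms(3) by simp
  then have p0: "p * q \<noteq> 0 \<or> q = 0" by auto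
  have "poly q 1 \<noteq> 0" using q[rule_format, of 1] assms(4) by simp
  then have "q \<noteq> 0" by auto
  have "p \<noteq> 0" using \<open>poly p 0 \<noteq> 0\<close> by auto
  then have "p * q \<noteq> 0" using \<open>q \<noteq> 0\<close> by simp
  then have "finite {t. poly (p * q) t = 0}" by (rule poly_roots_finite)
  then obtain t where "t \<notin> {t. poly (p * q) t = 0}"
    using ex_new_if_finite[OF infinite_UNIV_char_0] by blast
  then show ?thesis using p q by (intro exI[of _ "\<lambda>v. x1 v + t * (x2 v - x1 v)"]) auto
qed

lemma gram:
  fixes M :: "('v \<Rightarrow> complex) \<Rightarrow> complex^'n^'m"
  assumes poly: "\<And>i j. (\<lambda>x. M x $ i $ j) \<in> polyfun"
    and inj0: "\<And>y. M x0 *v y = 0 \<Longrightarrow> y = 0"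
  shows "\<exists>P\<in>polyfun. P x0 \<noteq> 0 \<and> (\<forall>x. P x \<noteq> 0 \<longrightarrow> (\<forall>y. M x *v y = 0 \<longrightarrow> y = 0))"
proof -
  define C :: "complex^'m^'n" where "C = (\<chi> i j. cnj (M x0 $ j $ i))"
  define P where "P = (\<lambda>x. det (C ** M x))"
  have "P \<in> polyfun" unfolding P_def
    apply (rule polyfun_det)
    unfolding matrix_matrix_mult_def
    apply simp
    apply (rule polyfun_sum, simp)
    apply (rule polyfun.mult[OF polyfun.const])
    by (rule poly)
  moreover have "P x0 \<noteq> 0"
  proof -
    have "inj ((*v) (C ** M x0))"
    proof (rule injI)
      fix u w assume "(C ** M x0) *v u = (C ** M x0) *v w"
      then have e: "(C ** M x0) *v (u - w) = 0"
        by (simp add: matrix_vector_mult_diff_distrib)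
      define z where "z = M x0 *v (u - w)"
      have "C *v z = 0" using e unfolding z_def by (simp add: matrix_vector_mul_assoc)
      then have "(\<Sum>j\<in>UNIV. cnj (z $ j) * z $ j) = 0"
      proof -
        assume cz: "C *v z = 0"
        define v where "v = u - w"
        have cz1: "cnj (z $ j) = (\<Sum>i\<in>UNIV. cnj (M x0 $ j $ i) * cnj (v $ i))" for j
          unfolding z_def v_def matrix_vector_mult_def by simp
        have "(\<Sum>j\<in>UNIV. cnj (z $ j) * z $ j) = (\<Sum>j\<in>UNIV. \<Sum>i\<in>UNIV. cnj (v $ i) * (cnj (M x0 $ j $ i) * z $ j))"
          unfolding cz1 sum_distrib_right by (simp add: mult_ac)
        also have "\<dots> = (\<Sum>i\<in>UNIV. \<Sum>j\<in>UNIV. cnj (v $ i) * (cnj (M x0 $ j $ i) * z $ j))"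
          by (rule sum.swap)
        also have "\<dots> = (\<Sum>i\<in>UNIV. cnj (v $ i) * (C *v z) $ i)"
          unfolding sum_distrib_left[symmetric] matrix_vector_mult_def C_def by simp
        finally show ?thesis using cz by simp
      qed
      moreover have "cnj (z $ j) * z $ j = of_real ((cmod (z $ j))\<^sup>2)" for j
        by (metis complex_norm_square mult.commute)
      ultimately have "of_real (\<Sum>j\<in>UNIV. (cmod (z $ j))\<^sup>2) = (0::complex)" by simp
      then have "(\<Sum>j\<in>UNIV. (cmod (z $ j))\<^sup>2) = 0" using of_real_eq_0_iff by blast
      then have "\<forall>j\<in>UNIV. (cmod (z $ j))\<^sup>2 = 0"
        by (subst (asm) sum_nonneg_eq_0_iff) auto
      then have "z = 0" by (simp add: vec_eq_iff)
      then show "u = w" using inj0 unfolding z_def by (metis eq_iff_diff_eq_0)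
    qed
    then show ?thesis unfolding P_def
      using det_nz_iff_inj_gen[of "(*v) (C ** M x0)"] by simp
  qed
  moreover have "\<forall>x. P x \<noteq> 0 \<longrightarrow> (\<forall>y. M x *v y = 0 \<longrightarrow> y = 0)"
  proof (intro allI impI)
    fix x y assume "P x \<noteq> 0" "M x *v y = 0"
    then have "invertible (C ** M x)" unfolding P_def by (simp add: invertible_det_nz)
    then obtain B where B: "B ** (C ** M x) = mat 1" unfolding invertible_def by blast
    have "y = (B ** (C ** M x)) *v y" using B by simp
    also have "\<dots> = B *v (C *v (M x *v y))" by (simp add: matrix_vector_mul_assoc)
    finally show "y = 0" using \<open>M x *v y = 0\<close> by simp
  qed
  ultimately show ?thesis by blast
qed


definition Dm :: "('a::finite \<Rightarrow> nat) \<Rightarrow> complex^'a^'a" where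
  "Dm ia = (\<chi> i j. if i = j then of_nat (ia i) else 0)"
definition Sm :: "('a::finite \<Rightarrow> nat) \<Rightarrow> complex^'a^'a" where
  "Sm ia = (\<chi> i j. if ia j = (ia i + 1) mod CARD('a) then 1 else 0)"
definition Pm :: "('a::finite \<Rightarrow> nat) \<Rightarrow> ('b::finite \<Rightarrow> nat) \<Rightarrow> nat \<Rightarrow> complex^'a^'b" where
  "Pm ia ib t = (\<chi> r s. if ib r = t * CARD('a) + ia s then 1 else 0)"
definition Mm :: "('a::finite \<Rightarrow> nat) \<Rightarrow> nat \<Rightarrow> complex^'a^'a" where
  "Mm ia m = (if m = 0 then mat 1 else if m = 1 then Dm ia else Sm ia)"

lemma sum_single_vec:
  fixes g :: "'n::finite \<Rightarrow> complex"
  assumes "\<And>i. P i \<longleftrightarrow> i = ic"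
  shows "(\<Sum>i\<in>UNIV. (if P i then 1 else 0) * g i) = g ic"
proof -
  have "(\<Sum>i\<in>UNIV. (if P i then 1 else 0) * g i) = (\<Sum>i\<in>UNIV. if i = ic then g i else 0)"
    using assms by (intro sum.cong) auto
  then show ?thesis by simp
qed

lemma mod_pred_eq:
  fixes a m :: nat
  assumes "1 < a" "m < a"
  shows "(m + a - 1) mod a = (if m = 0 then a - 1 else m - 1)"
proof (cases "m = 0")
  case True then show ?thesis using assms by simp
next
  case False
  then have "m + a - 1 = (m - 1) + a" by simp
  then have "(m + a - 1) mod a = ((m - 1) + a) mod a" by simp
  also have "\<dots> = (m - 1) mod a" by simp
  also have "\<dots> = m - 1" using assms by simp
  finally show ?thesis using False by simp
qed

lemma mod_suc_eq:
  fixes a n :: nat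
  assumes "1 < a" "n < a"
  shows "(n + 1) mod a = (if n = a - 1 then 0 else n + 1)"
  using assms by (auto simp: mod_if)

lemma mod_pred_iff:
  fixes a n m :: nat
  assumes "1 < a" "n < a" "m < a"
  shows "m = (n + 1) mod a \<longleftrightarrow> n = (m + a - 1) mod a"
  unfolding mod_pred_eq[OF assms(1,3)] mod_suc_eq[OF assms(1,2)] using assms by auto

lemma comm_lemma:
  fixes u :: "complex^'a::finite"
  assumes a: "1 < CARD('a)" and bij: "bij_betw ia (UNIV::'a set) {0..<CARD('a)}"
    and eq: "(u v* Sm ia) v* Dm ia = (u v* Dm ia) v* Sm ia"
  shows "u = 0"
proof -
  let ?a = "CARD('a)"
  define ja where "ja = inv_into UNIV ia"
  have iaj: "ia (ja n) = n" if "n < ?a" for n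
    using bij that unfolding ja_def by (simp add: bij_betw_inv_into_right)
  have jai: "ja (ia s) = s" for s
    using bij unfolding ja_def by (simp add: bij_betw_imp_inj_on)
  have ialt: "ia s < ?a" for s using bij by (auto simp: bij_betw_def)
  define pr where "pr s = ja ((ia s + ?a - 1) mod ?a)" for s
  have iapr: "ia (pr s) = (ia s + ?a - 1) mod ?a" for s
    unfolding pr_def using a by (intro iaj) simp
  have Siff: "ia s' = (ia s + 1) mod ?a \<longleftrightarrow> s = pr s'" for s s'
  proof -
    have "ia s' = (ia s + 1) mod ?a \<longleftrightarrow> ia s = (ia s' + ?a - 1) mod ?a"
      using mod_pred_iff[OF a ialt ialt] .
    also have "\<dots> \<longleftrightarrow> ia s = ia (pr s')" using iapr by simp
    also have "\<dots> \<longleftrightarrow> s = pr s'" using bij by (metis jai)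
    finally show ?thesis .
  qed
  have uS: "(v v* Sm ia) $ s' = v $ (pr s')" for v :: "complex^'a" and s'
    unfolding vector_matrix_mult_def Sm_def
    apply (simp only: vec_lambda_beta mult.commute[of "v $ _"])
    by (rule sum_single_vec) (rule Siff)
  have uD: "(v v* Dm ia) $ s' = v $ s' * of_nat (ia s')" for v :: "complex^'a" and s'
  proof -
    have "(v v* Dm ia) $ s' = (\<Sum>i\<in>UNIV. if i = s' then v $ i * of_nat (ia i) else 0)"
      unfolding vector_matrix_mult_def Dm_def by (simp add: if_distrib cong: if_cong)
    then show ?thesis by simp
  qed
  have "u $ s = 0" for s
  proof -
    define s' where "s' = ja ((ia s + 1) mod ?a)"
    have "s = pr s'" unfolding Siff[symmetric] s'_def using a by (simp add: iaj)
    have "ia s' \<noteq> ia (pr s')"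
    proof -
      have "ia s' < ?a" by (rule ialt)
      then show ?thesis unfolding iapr mod_pred_eq[OF a \<open>ia s' < ?a\<close>] using a by auto
    qed
    have "((u v* Sm ia) v* Dm ia) $ s' = ((u v* Dm ia) v* Sm ia) $ s'" using eq by simp
    then have "u $ (pr s') * of_nat (ia s') = u $ (pr s') * of_nat (ia (pr s'))"
      by (simp add: uS uD)
    then show ?thesis using \<open>ia s' \<noteq> ia (pr s')\<close> \<open>s = pr s'\<close> by simp
  qed
  then show ?thesis by (simp add: vec_eq_iff)
qed

lemma cover_lemma:
  fixes y :: "complex^'b::finite"
  assumes bija: "bij_betw ia (UNIV::'a::finite set) {0..<CARD('a)}"
    and bijb: "bij_betw ib (UNIV::'b set) {0..<CARD('b)}"
    and h: "\<And>t. t < (CARD('b) - 1) div CARD('a) + 1 \<Longrightarrow> y v* Pm ia ib t = 0"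
  shows "y = 0"
proof -
  let ?a = "CARD('a)"
  define ja where "ja = inv_into UNIV ia"
  have iaj: "ia (ja n) = n" if "n < ?a" for n
    using bija that unfolding ja_def by (simp add: bij_betw_inv_into_right)
  have ibi: "ib r' = ib r \<longleftrightarrow> r' = r" for r r'
    using bijb by (metis bij_betw_imp_inj_on inj_eq)
  have iblt: "ib r < CARD('b)" for r using bijb by (auto simp: bij_betw_def)
  have "y $ r = 0" for r
  proof -
    define t where "t = ib r div ?a"
    define s where "s = ja (ib r mod ?a)"
    have "ia s = ib r mod ?a" unfolding s_def by (rule iaj) simp
    then have e: "t * ?a + ia s = ib r" unfolding t_def by simp
    have "ib r \<le> CARD('b) - 1" using iblt[of r] by simp
    then have "t \<le> (CARD('b) - 1) div ?a" unfolding t_def by (rule div_le_mono)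
    then have "y v* Pm ia ib t = 0" by (intro h) simp
    then have "(y v* Pm ia ib t) $ s = 0" by simp
    moreover have "(y v* Pm ia ib t) $ s = y $ r"
      unfolding vector_matrix_mult_def Pm_def
      apply (simp only: vec_lambda_beta mult.commute[of "y $ _"] e)
      by (rule sum_single_vec) (rule ibi)
    ultimately show ?thesis by simp
  qed
  then show ?thesis by (simp add: vec_eq_iff)
qed

lemma block_lemma:
  fixes w :: "nat \<Rightarrow> nat \<Rightarrow> complex^'b::finite"
  assumes a: "1 < CARD('a::finite)"
    and bija: "bij_betw ia (UNIV::'a set) {0..<CARD('a)}"
    and bijb: "bij_betw ib (UNIV::'b set) {0..<CARD('b)}"
    and cond: "\<And>t t' m m'. t < (CARD('b) - 1) div CARD('a) + 1 \<Longrightarrow> t' < (CARD('b) - 1) div CARD('a) + 1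
       \<Longrightarrow> m < 3 \<Longrightarrow> m' < 3 \<Longrightarrow>
       w t' m' v* (Pm ia ib t ** Mm ia m) = w t m v* (Pm ia ib t' ** Mm ia m')"
    and t: "t < (CARD('b) - 1) div CARD('a) + 1" and m: "m < 3"
  shows "w t m = 0"
proof -
  let ?p = "(CARD('b) - 1) div CARD('a) + 1"
  define z where "z t m t' = w t m v* Pm ia ib t'" for t m t'
  have c: "z t' m' t v* Mm ia m = z t m t' v* Mm ia m'"
    if "t < ?p" "t' < ?p" "m < 3" "m' < 3" for t t' m m'
    using cond[OF that] unfolding z_def by (simp add: vector_matrix_mul_assoc)
  have M0: "Mm ia 0 = mat 1" and M1: "Mm ia 1 = Dm ia" and M2: "Mm ia 2 = Sm ia"
    by (simp_all add: Mm_def)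
  have z0: "z t 0 t' = 0" if "t < ?p" "t' < ?p" for t t'
  proof -
    let ?u = "z t 0 t'"
    have c0: "z t' 0 t = ?u" using c[OF that, of 0 0] by (simp add: M0)
    have c4: "z t 1 t' = ?u v* Dm ia" using c[OF that(2,1), of 0 1] c0 by (simp add: Mm_def)
    have c2: "z t' 2 t = ?u v* Sm ia" using c[OF that, of 0 2] by (simp add: M0 M2)
    have c5: "z t' 2 t v* Dm ia = z t 1 t' v* Sm ia" using c[OF that, of 1 2] by (simp add: Mm_def)
    show ?thesis using c5 unfolding c4 c2 by (rule comm_lemma[OF a bija])
  qed
  have "z t m t' = 0" if "t' < ?p" for t'
  proof -
    consider "m = 0" | "m = 1" | "m = 2" using m by linarith
    then show ?thesis
    proof cases
      case 1 then show ?thesis using z0 t that by simp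
    next
      case 2
      have "z t 1 t' = z t 0 t' v* Dm ia"
        using c[OF that t, of 0 1] c[OF t that, of 0 0] by (simp add: Mm_def)
      then show ?thesis using 2 z0 t that by simp
    next
      case 3
      have "z t 2 t' = z t' 0 t v* Sm ia"
        using c[OF that t, of 0 2] by (simp add: M0 M2)
      then show ?thesis using 3 z0 t that by simp
    qed
  qed
  then show ?thesis unfolding z_def by (intro cover_lemma[OF bija bijb])
qed

definition symcond :: "('k \<Rightarrow> complex^'a^'b) \<Rightarrow> ('k \<Rightarrow> complex^'b) \<Rightarrow> bool" where
  "symcond A y \<longleftrightarrow> (\<forall>i j. y j v* A i = y i v* A j)"

lemma exists_B0:
  assumes a: "1 < CARD('a::finite)"
    and k: "3 * ((CARD('b::finite) - 1) div CARD('a) + 1) \<le> CARD('k::finite)"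
  shows "\<exists>B0 :: 'k \<Rightarrow> complex^'a^'b. \<forall>y. symcond B0 y \<longrightarrow> (\<forall>i. y i = 0)"
proof -
  let ?p = "(CARD('b) - 1) div CARD('a) + 1"
  obtain ia where bija: "bij_betw ia (UNIV::'a set) {0..<CARD('a)}"
    using ex_bij_betw_finite_nat[of "UNIV::'a set"] by auto
  obtain ib where bijb: "bij_betw ib (UNIV::'b set) {0..<CARD('b)}"
    using ex_bij_betw_finite_nat[of "UNIV::'b set"] by auto
  obtain ik where bijk: "bij_betw ik (UNIV::'k set) {0..<CARD('k)}"
    using ex_bij_betw_finite_nat[of "UNIV::'k set"] by auto
  define jk where "jk = inv_into UNIV ik"
  have ikj: "ik (jk n) = n" if "n < CARD('k)" for n
    using bijk that unfolding jk_def by (simp add: bij_betw_inv_into_right)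
  have jki: "jk (ik i) = i" for i
    using bijk unfolding jk_def by (simp add: bij_betw_imp_inj_on)
  define B0 :: "'k \<Rightarrow> complex^'a^'b" where
    "B0 i = (if ik i < 3 * ?p then Pm ia ib (ik i div 3) ** Mm ia (ik i mod 3) else 0)" for i
  have Bj: "B0 (jk (3 * t + m)) = Pm ia ib t ** Mm ia m" if "t < ?p" "m < 3" for t m
  proof -
    have "t + 1 \<le> ?p" using that by linarith
    then have "3 * (t + 1) \<le> 3 * ?p" by (rule mult_le_mono2)
    moreover have "3 * t + m < 3 * (t + 1)" using that by simp
    ultimately have "3 * t + m < 3 * ?p" by (rule less_le_trans[rotated])
    then have "ik (jk (3 * t + m)) = 3 * t + m" using k by (intro ikj) linarith
    then show ?thesis unfolding B0_def using that \<open>3 * t + m < 3 * ?p\<close> by simp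
  qed
  have "\<forall>i. y i = 0" if sy: "symcond B0 y" for y
  proof -
    define w where "w t m = y (jk (3 * t + m))" for t m
    have w0: "w t m = 0" if "t < ?p" "m < 3" for t m
    proof (rule block_lemma[OF a bija bijb _ that])
      fix t t' m m' assume h: "t < ?p" "t' < ?p" "m < (3::nat)" "m' < (3::nat)"
      show "w t' m' v* (Pm ia ib t ** Mm ia m) = w t m v* (Pm ia ib t' ** Mm ia m')"
        using sy unfolding symcond_def w_def Bj[OF h(1,3), symmetric] Bj[OF h(2,4), symmetric]
        by blast
    qed
    show ?thesis
    proof
      fix i
      show "y i = 0"
      proof (cases "ik i < 3 * ?p")
        case True
        have "y i = w (ik i div 3) (ik i mod 3)" unfolding w_def by (simp add: jki)
        also have "\<dots> = 0" using True by (intro w0) auto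
        finally show ?thesis .
      next
        case False
        then have B0i: "B0 i = 0" unfolding B0_def by simp
        show ?thesis
        proof (rule cover_lemma[OF bija bijb])
          fix t assume t: "t < ?p"
          have "y (jk (3 * t + 0)) v* B0 i = y i v* B0 (jk (3 * t + 0))"
            using sy unfolding symcond_def by blast
          then show "y i v* Pm ia ib t = 0" using Bj[OF t, of 0] B0i by (simp add: Mm_def)
        qed
      qed
    qed
  qed
  then show ?thesis by blast
qed


definition toX :: "('k \<Rightarrow> complex^'a^'b) \<Rightarrow> ('k \<times> 'b \<times> 'a \<Rightarrow> complex)" where
  "toX A = (\<lambda>(i, r, s). A i $ r $ s)"

definition LM :: "('k::finite \<times> 'b::finite \<times> 'a::finite \<Rightarrow> complex) \<Rightarrow> complex^('k \<times> 'b)^('k \<times> 'k \<times> 'a)" where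
  "LM x = (\<chi> u w. (\<lambda>(i, j, s) (i', r). (if i' = j then x (i, r, s) else 0) - (if i' = i then x (j, r, s) else 0)) u w)"

definition CM :: "('k::finite \<times> 'b::finite \<times> 'a::finite \<Rightarrow> complex) \<Rightarrow> complex^'k^('b \<times> 'a)" where
  "CM x = (\<chi> u i. (\<lambda>(r, s). x (i, r, s)) u)"

lemma toX_apply[simp]: "toX A (i, r, s) = A i $ r $ s"
  by (simp add: toX_def)

lemma LM_entry[simp]: "LM x $ (i, j, s) $ (i', r) = (if i' = j then x (i, r, s) else 0) - (if i' = i then x (j, r, s) else 0)"
  by (simp add: LM_def)

lemma polyfun_ifvar: "(\<lambda>x. if b then x v else 0) \<in> polyfun"
  by (cases b) (simp_all add: polyfun.var polyfun.const)

lemma LM_poly: "(\<lambda>x. LM x $ u $ w) \<in> polyfun"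
proof -
  obtain i j s where u: "u = (i, j, s)" by (cases u) auto
  obtain i' r where w: "w = (i', r)" by (cases w) auto
  show ?thesis unfolding u w LM_def
    by (simp add: polyfun_diff polyfun_ifvar)
qed

lemma CM_poly: "(\<lambda>x. CM x $ u $ w) \<in> polyfun"
proof -
  obtain r s where u: "u = (r, s)" by (cases u) auto
  show ?thesis unfolding u CM_def by (simp add: polyfun.var)
qed

lemma LM_apply:
  fixes A :: "'k::finite \<Rightarrow> complex^'a::finite^'b::finite"
  shows "(LM (toX A) *v Y) $ (i, j, s) =
     ((\<chi> r. Y $ (j, r)) v* A i) $ s - ((\<chi> r. Y $ (i, r)) v* A j) $ s"
proof -
  have "(LM (toX A) *v Y) $ (i, j, s) =
     (\<Sum>(i', r)\<in>UNIV. ((if i' = j then A i $ r $ s else 0) - (if i' = i then A j $ r $ s else 0)) * Y $ (i', r))"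
    unfolding matrix_vector_mult_def
    apply simp
    apply (intro sum.cong refl)
    subgoal for w by (cases w) simp
    done
  also have "\<dots> = (\<Sum>(i', r)\<in>UNIV \<times> UNIV. ((if i' = j then A i $ r $ s else 0) - (if i' = i then A j $ r $ s else 0)) * Y $ (i', r))"
    by (simp only: UNIV_Times_UNIV)
  also have "\<dots> = (\<Sum>i'\<in>UNIV. \<Sum>r\<in>UNIV. ((if i' = j then A i $ r $ s else 0) - (if i' = i then A j $ r $ s else 0)) * Y $ (i', r))"
    by (rule sum.cartesian_product[symmetric])
  also have "\<dots> = (\<Sum>i'\<in>UNIV. (if i' = j then (\<Sum>r\<in>UNIV. A i $ r $ s * Y $ (i', r)) else 0)
        - (if i' = i then (\<Sum>r\<in>UNIV. A j $ r $ s * Y $ (i', r)) else 0))"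
    by (intro sum.cong refl) (simp add: left_diff_distrib sum_subtractf)
  also have "\<dots> = (\<Sum>r\<in>UNIV. A i $ r $ s * Y $ (j, r)) - (\<Sum>r\<in>UNIV. A j $ r $ s * Y $ (i, r))"
    by (simp add: sum_subtractf)
  also have "\<dots> = ((\<chi> r. Y $ (j, r)) v* A i) $ s - ((\<chi> r. Y $ (i, r)) v* A j) $ s"
    unfolding vector_matrix_mult_def by (simp add: mult.commute)
  finally show ?thesis .
qed

lemma LM_iff:
  fixes A :: "'k::finite \<Rightarrow> complex^'a::finite^'b::finite"
  shows "LM (toX A) *v Y = 0 \<longleftrightarrow> symcond A (\<lambda>i. \<chi> r. Y $ (i, r))"
proof
  assume h: "LM (toX A) *v Y = 0"
  show "symcond A (\<lambda>i. \<chi> r. Y $ (i, r))" unfolding symcond_def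
  proof (intro allI)
    fix i j
    have "(LM (toX A) *v Y) $ (i, j, s) = 0" for s using h by simp
    then show "(\<chi> r. Y $ (j, r)) v* A i = (\<chi> r. Y $ (i, r)) v* A j"
      unfolding LM_apply by (simp add: vec_eq_iff)
  qed
next
  assume h: "symcond A (\<lambda>i. \<chi> r. Y $ (i, r))"
  show "LM (toX A) *v Y = 0"
  proof (subst vec_eq_iff, intro allI)
    fix u :: "'k \<times> 'k \<times> 'a"
    obtain i j s where u: "u = (i, j, s)" by (cases u) auto
    show "(LM (toX A) *v Y) $ u = 0 $ u"
      using h unfolding u LM_apply symcond_def by simp
  qed
qed


lemma cscale_zero_left[simp]: "cscale 0 M = 0" by (simp add: cscale_def vec_eq_iff)
lemma cscale_zero_right[simp]: "cscale c 0 = 0" by (simp add: cscale_def vec_eq_iff)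

lemma ker_from_LM:
  fixes A :: "'k::finite \<Rightarrow> complex^'a::finite^'b::finite"
  assumes "\<forall>Y. LM (toX A) *v Y = 0 \<longrightarrow> Y = 0" "symcond A y"
  shows "y i = 0"
proof -
  define Y :: "complex^('k \<times> 'b)" where "Y = (\<chi> w. y (fst w) $ snd w)"
  have "(\<lambda>i. \<chi> r. Y $ (i, r)) = y" unfolding Y_def by (simp add: vec_eq_iff)
  then have "LM (toX A) *v Y = 0" using LM_iff[of A Y] assms(2) by simp
  then have "Y = 0" using assms(1) by blast
  then show ?thesis unfolding Y_def by (simp add: vec_eq_iff)
qed

lemma LM_from_ker:
  fixes A :: "'k::finite \<Rightarrow> complex^'a::finite^'b::finite"
  assumes "\<forall>y. symcond A y \<longrightarrow> (\<forall>i. y i = 0)" "LM (toX A) *v Y = 0"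
  shows "Y = 0"
proof -
  have "symcond A (\<lambda>i. \<chi> r. Y $ (i, r))" using LM_iff[of A Y] assms(2) by simp
  then have "\<forall>i. (\<chi> r. Y $ (i, r)) = 0" using assms(1) by blast
  then have "Y $ (i, r) = 0" for i r by (metis vec_lambda_beta zero_index)
  then show ?thesis by (simp add: vec_eq_iff)
qed

lemma indep_from_CM:
  fixes A :: "'k::finite \<Rightarrow> complex^'a::finite^'b::finite"
  assumes "\<forall>c. CM (toX A) *v c = 0 \<longrightarrow> c = 0"
  shows "clin_indep_mats A"
  unfolding clin_indep_mats_def
proof (intro allI impI)
  fix c :: "'k \<Rightarrow> complex" and i
  assume h: "(\<Sum>i\<in>UNIV. cscale (c i) (A i)) = 0"
  define cv :: "complex^'k" where "cv = (\<chi> i. c i)"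
  have "(CM (toX A) *v cv) $ (r, s) = (\<Sum>i\<in>UNIV. cscale (c i) (A i)) $ r $ s" for r s
    unfolding matrix_vector_mult_def CM_def cv_def cscale_def
    by (simp add: sum_component mult.commute)
  then have "CM (toX A) *v cv = 0" using h
    by (simp add: vec_eq_iff)
  then have "cv = 0" using assms by blast
  then show "c i = 0" unfolding cv_def by (metis vec_lambda_beta zero_index)
qed

lemma cscale_one[simp]: "cscale 1 M = M" by (simp add: cscale_def vec_eq_iff)

lemma symm_zero:
  fixes A :: "'k::finite \<Rightarrow> complex^'a::finite^'b::finite"
  assumes ker: "\<forall>y. symcond A y \<longrightarrow> (\<forall>i. y i = 0)"
  shows "Symm_phi (cspan_mats A) = {(\<lambda>_. 0 :: complex^'b^'c::finite)}"
proof -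
  let ?E = "cspan_mats A"
  have mem_sub: "(\<Sum>i\<in>F. cscale (c i) (A i)) \<in> ?E" for F c
  proof -
    have "(\<Sum>i\<in>UNIV. cscale (if i \<in> F then c i else 0) (A i)) = (\<Sum>i\<in>UNIV. if i \<in> F then cscale (c i) (A i) else 0)"
      by (intro sum.cong) auto
    also have "\<dots> = (\<Sum>i\<in>UNIV \<inter> F. cscale (c i) (A i))"
      by (rule sum.inter_restrict[symmetric]) simp
    finally have e: "(\<Sum>i\<in>UNIV. cscale (if i \<in> F then c i else 0) (A i)) = (\<Sum>i\<in>F. cscale (c i) (A i))"
      by simp
    show ?thesis unfolding cspan_mats_def
      by (rule CollectI, rule exI[of _ "\<lambda>i. if i \<in> F then c i else 0"]) (simp only: e)
  qed
  have "q = (\<lambda>_. 0)" if q: "q \<in> Symm_phi ?E" for q :: "complex^'a^'b \<Rightarrow> complex^'b^'c"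
  proof -
    have lin: "clinear_on_mats ?E q" and sym: "\<forall>\<alpha>\<in>?E. \<forall>\<alpha>'\<in>?E. q \<alpha>' ** \<alpha> = q \<alpha> ** \<alpha>'"
      using q unfolding Symm_phi_def by auto
    have memA: "A i \<in> ?E" for i using mem_sub[where F="{i}" and c="\<lambda>_. 1"] by simp
    have qA: "q (A i) = 0" for i
    proof -
      have "q (A i) $ g $ r = 0" for g r
      proof -
        define y where "y j = (\<chi> r. q (A j) $ g $ r)" for j
        have "symcond A y" unfolding symcond_def
        proof (intro allI)
          fix i j
          have "q (A j) ** A i = q (A i) ** A j" using sym memA by blast
          then show "y j v* A i = y i v* A j"
            unfolding y_def vector_matrix_mult_def
            by (simp add: vec_eq_iff matrix_matrix_mult_def)
        qed
        then have "y i = 0" using ker by blast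
        then show ?thesis unfolding y_def by (metis vec_lambda_beta zero_index)
      qed
      then show ?thesis by (simp add: vec_eq_iff)
    qed
    have q0: "q 0 = 0"
    proof -
      have "0 \<in> ?E" using mem_sub[where F="{}"] by simp
      then have "q (0 + 0) = q 0 + q 0" using lin unfolding clinear_on_mats_def by blast
      then show ?thesis by simp
    qed
    have qsum: "q (\<Sum>i\<in>F. cscale (c i) (A i)) = 0" if "finite F" for F c
      using that
    proof (induction F rule: finite_induct)
      case empty
      then show ?case using q0 by simp
    next
      case (insert a F)
      have m1: "cscale (c a) (A a) \<in> ?E" using mem_sub[where F="{a}"] by simp
      have m2: "(\<Sum>i\<in>F. cscale (c i) (A i)) \<in> ?E" by (rule mem_sub)
      have "q (\<Sum>i\<in>insert a F. cscale (c i) (A i)) = q (cscale (c a) (A a) + (\<Sum>i\<in>F. cscale (c i) (A i)))"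
        using insert by simp
      also have "\<dots> = q (cscale (c a) (A a)) + q (\<Sum>i\<in>F. cscale (c i) (A i))"
        using lin m1 m2 unfolding clinear_on_mats_def by blast
      also have "\<dots> = cscale (c a) (q (A a))"
        using lin memA insert.IH unfolding clinear_on_mats_def by simp
      finally show ?case using qA by simp
    qed
    show ?thesis
    proof
      fix x
      show "q x = 0"
      proof (cases "x \<in> ?E")
        case True
        then obtain c where "x = (\<Sum>i\<in>UNIV. cscale (c i) (A i))" unfolding cspan_mats_def by blast
        then show ?thesis using qsum by simp
      next
        case False
        then show ?thesis using lin unfolding clinear_on_mats_def by blast
      qed
    qed
  qed
  moreover have "(\<lambda>_. 0 :: complex^'b^'c) \<in> Symm_phi ?E"
    unfolding Symm_phi_def clinear_on_mats_def by simp
  ultimately show ?thesis by blast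
qed


lemma CM_entry[simp]: "CM x $ (r, s) $ i = x (i, r, s)"
  by (simp add: CM_def)

lemma exists_A1:
  assumes "CARD('k::finite) \<le> CARD('a::finite) * CARD('b::finite)"
  shows "\<exists>A1 :: 'k \<Rightarrow> complex^'a^'b. \<forall>c. CM (toX A1) *v c = 0 \<longrightarrow> c = 0"
proof -
  have "card (UNIV::'k set) \<le> card (UNIV::('b \<times> 'a) set)"
  proof -
    have "card (UNIV::('b \<times> 'a) set) = card (UNIV::'b set) * card (UNIV::'a set)"
      by (metis card_cartesian_product UNIV_Times_UNIV)
    then show ?thesis using assms by (simp add: mult.commute)
  qed
  then obtain f :: "'k \<Rightarrow> 'b \<times> 'a" where "inj_on f UNIV"
    using card_le_inj[of "UNIV::'k set" "UNIV::('b \<times> 'a) set"] by auto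
  then have finj: "f i' = f i \<longleftrightarrow> i' = i" for i i' by (meson injD)
  define A1 :: "'k \<Rightarrow> complex^'a^'b" where "A1 i = (\<chi> r s. if (r, s) = f i then 1 else 0)" for i
  have "c = 0" if h: "CM (toX A1) *v c = 0" for c
  proof -
    have "c $ i = 0" for i
    proof -
      obtain r s where rs: "f i = (r, s)" by (cases "f i") auto
      have e: "CM (toX A1) $ (r, s) $ i' = (if i' = i then 1 else 0)" for i'
      proof -
        have "CM (toX A1) $ (r, s) $ i' = (if (r, s) = f i' then 1 else 0)" by (simp add: A1_def)
        moreover have "(r, s) = f i' \<longleftrightarrow> i' = i" using finj rs by metis
        ultimately show ?thesis by simp
      qed
      have "(CM (toX A1) *v c) $ (r, s) = (\<Sum>i'\<in>UNIV. (if i' = i then 1 else 0) * c $ i')"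
        unfolding matrix_vector_mult_def vec_lambda_beta e ..
      also have "\<dots> = (\<Sum>i'\<in>UNIV. if i' = i then c $ i' else 0)" by (intro sum.cong) auto
      also have "\<dots> = c $ i" by simp
      finally show ?thesis using h by simp
    qed
    then show ?thesis by (simp add: vec_eq_iff)
  qed
  then show ?thesis by blast
qed

theorem mainTheorem4:
  assumes "CARD('a::finite) > 1"
    and "3 * ((CARD('b::finite) - 1) div CARD('a) + 1) \<le> CARD('k::finite)"
    and "CARD('k) \<le> CARD('a) * CARD('b)"
  shows "\<exists>P \<in> polyfun. (\<exists>x. P x \<noteq> 0) \<and>
           (\<forall>A :: 'k \<Rightarrow> complex^'a^'b.
              P (\<lambda>(i, r, s). A i $ r $ s) \<noteq> 0 \<longrightarrow>
                clin_indep_mats A \<and>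
                Symm_phi (cspan_mats A) = {(\<lambda>_. 0 :: complex^'b^'c::finite)})"
proof -
  obtain B0 :: "'k \<Rightarrow> complex^'a^'b" where B0: "\<forall>y. symcond B0 y \<longrightarrow> (\<forall>i. y i = 0)"
    using exists_B0[OF assms(1) assms(2)] by blast
  have LMB: "\<And>Y. LM (toX B0) *v Y = 0 \<Longrightarrow> Y = 0" using LM_from_ker[OF B0] by blast
  have "\<exists>P\<in>polyfun. P (toX B0) \<noteq> 0 \<and> (\<forall>x. P x \<noteq> 0 \<longrightarrow> (\<forall>y. LM x *v y = 0 \<longrightarrow> y = 0))"
    by (rule gram) (rule LM_poly, rule LMB)
  then obtain PK where PK: "PK \<in> polyfun" "PK (toX B0) \<noteq> 0"
    "\<forall>x. PK x \<noteq> 0 \<longrightarrow> (\<forall>Y. LM x *v Y = 0 \<longrightarrow> Y = 0)"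
    by blast
  obtain A1 :: "'k \<Rightarrow> complex^'a^'b" where A1: "\<forall>c. CM (toX A1) *v c = 0 \<longrightarrow> c = 0"
    using exists_A1[OF assms(3)] by blast
  have CMA: "\<And>c. CM (toX A1) *v c = 0 \<Longrightarrow> c = 0" using A1 by blast
  have "\<exists>P\<in>polyfun. P (toX A1) \<noteq> 0 \<and> (\<forall>x. P x \<noteq> 0 \<longrightarrow> (\<forall>y. CM x *v y = 0 \<longrightarrow> y = 0))"
    by (rule gram) (rule CM_poly, rule CMA)
  then obtain PI where PI: "PI \<in> polyfun" "PI (toX A1) \<noteq> 0"
    "\<forall>x. PI x \<noteq> 0 \<longrightarrow> (\<forall>c. CM x *v c = 0 \<longrightarrow> c = 0)"
    by blast
  have "\<exists>x. PI x \<noteq> 0 \<and> PK x \<noteq> 0"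
    by (rule polyfun_common[of PI PK "toX A1" "toX B0"]) (fact PI(1), fact PK(1), fact PI(2), fact PK(2))
  then obtain x0 where x0: "PI x0 \<noteq> 0" "PK x0 \<noteq> 0" by blast
  define P where "P = (\<lambda>x. PI x * PK x)"
  have Ppoly: "P \<in> polyfun" unfolding P_def using PI(1) PK(1) by (rule polyfun.mult)
  have Pnz: "\<exists>x. P x \<noteq> 0" using x0 unfolding P_def by auto
  have main: "clin_indep_mats A \<and> Symm_phi (cspan_mats A) = {(\<lambda>_. 0 :: complex^'b^'c::finite)}"
    if h: "P (\<lambda>(i, r, s). A i $ r $ s) \<noteq> 0" for A :: "'k \<Rightarrow> complex^'a^'b"
  proof -
    have "PI (toX A) \<noteq> 0" "PK (toX A) \<noteq> 0" using h unfolding P_def toX_def by auto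
    then have c1: "\<forall>c. CM (toX A) *v c = 0 \<longrightarrow> c = 0" and c2: "\<forall>Y. LM (toX A) *v Y = 0 \<longrightarrow> Y = 0"
      using PI(3) PK(3) by simp_all
    have "clin_indep_mats A" using c1 by (rule indep_from_CM)
    moreover have "\<forall>y. symcond A y \<longrightarrow> (\<forall>i. y i = 0)"
      using ker_from_LM[OF c2] by blast
    then have "Symm_phi (cspan_mats A) = {(\<lambda>_. 0 :: complex^'b^'c::finite)}" by (rule symm_zero)
    ultimately show ?thesis by blast
  qed
  show ?thesis
    apply (rule bexI[OF _ Ppoly])
    apply (rule conjI[OF Pnz])
    apply (intro allI impI)
    by (rule main)
qed

end
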